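(* Let $x\in M_1$ be ap-chain recurrent. Then $\overline{[x]_{ap}}\subset M_0\cup[x]_{ap}$. In particular, if $\overline{[x]_{ap}}\subset M_1$ then $[x]_{ap}$ is closed.
   Context: Let $M\subset\mathbb{R}^d$ be closed (topology relative to $M$). Let $F:M\to M$ be continuous with $\sup_{x\in M}\|F(x)\|<\infty$. Let $d(x,y)=\max_i|x_i-y_i|$. Suppose $M=M_0\cup M_1$ (disjoint) with $M_0$ closed, $F(M_0)\subseteq M_0$ and $F(M_1)\subseteq M_1$. ap-chain recurrence. For $\delta>0$, an ap $\delta$-pseudoorbit joining $x$ to $y$ is a tuple $(\xi_0,\dots,\xi_n)\in M^{n+1}$, $n\ge1$, with: - $\xi_0=x$ and $\xi_n=y$; - $\xi_i\in M_0\Rightarrow\xi_{i+1}\in M_0$; - $d(\xi_{i+1},F(\xi_i))<\delta$ for all $i$. Write $x<_{ap}y$ if for every $\delta>0$ such a pseudoorbit exists, and $x\sim_{ap}y$ if $x<_{ap}y$ and $y<_{ap}x$. A point $x$ is ap-chain recurrent if $x\sim_{ap}x$. The set of such points is $\mathcal{R}_{ap}$. The ap-basic class $[x]_{ap}$ of $x\in\mathcal{R}_{ap}$ is its equivalence class under $\sim_{ap}$ restricted to $\mathcal{R}_{ap}$. *)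

theory Defs
  imports "HOL-Analysis.Analysis"
begin

text \<open>Points of R^d are vectors of type real^'n (d = CARD('n)).
  The metric d(x,y) = max_i |x_i - y_i|.\<close>
definition maxdist :: "real^'n \<Rightarrow> real^'n \<Rightarrow> real" where
  "maxdist x y = Max (range (\<lambda>i. \<bar>x$i - y$i\<bar>))"

definition ap_pseudoorbit ::
  "(real^'n) set \<Rightarrow> (real^'n \<Rightarrow> real^'n) \<Rightarrow> (real^'n) set \<Rightarrow> real
    \<Rightarrow> real^'n \<Rightarrow> real^'n \<Rightarrow> (nat \<Rightarrow> real^'n) \<Rightarrow> nat \<Rightarrow> bool" where
  "ap_pseudoorbit M F M0 \<delta> x y \<xi> n \<longleftrightarrow>
     n \<ge> 1 \<and> (\<forall>i\<le>n. \<xi> i \<in> M) \<and> \<xi> 0 = x \<and> \<xi> n = y \<and>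
     (\<forall>i<n. \<xi> i \<in> M0 \<longrightarrow> \<xi> (Suc i) \<in> M0) \<and>
     (\<forall>i<n. maxdist (\<xi> (Suc i)) (F (\<xi> i)) < \<delta>)"

definition ap_less ::
  "(real^'n) set \<Rightarrow> (real^'n \<Rightarrow> real^'n) \<Rightarrow> (real^'n) set \<Rightarrow> real^'n \<Rightarrow> real^'n \<Rightarrow> bool" where
  "ap_less M F M0 x y \<longleftrightarrow> (\<forall>\<delta>>0. \<exists>\<xi> n. ap_pseudoorbit M F M0 \<delta> x y \<xi> n)"

definition ap_equiv ::
  "(real^'n) set \<Rightarrow> (real^'n \<Rightarrow> real^'n) \<Rightarrow> (real^'n) set \<Rightarrow> real^'n \<Rightarrow> real^'n \<Rightarrow> bool" where
  "ap_equiv M F M0 x y \<longleftrightarrow> ap_less M F M0 x y \<and> ap_less M F M0 y x"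

definition R_ap ::
  "(real^'n) set \<Rightarrow> (real^'n \<Rightarrow> real^'n) \<Rightarrow> (real^'n) set \<Rightarrow> (real^'n) set" where
  "R_ap M F M0 = {x \<in> M. ap_equiv M F M0 x x}"

definition ap_class ::
  "(real^'n) set \<Rightarrow> (real^'n \<Rightarrow> real^'n) \<Rightarrow> (real^'n) set \<Rightarrow> real^'n \<Rightarrow> (real^'n) set" where
  "ap_class M F M0 x = {y \<in> R_ap M F M0. ap_equiv M F M0 x y}"

end

theory Submission
  imports Defs
begin

lemma comp_le_maxdist: "\<bar>a$i - b$i\<bar> \<le> maxdist a b"
  unfolding maxdist_def by (rule Max_ge) auto

lemma maxdist_le: "(\<And>i. \<bar>a$i - b$i\<bar> \<le> K) \<Longrightarrow> maxdist a b \<le> K"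
  unfolding maxdist_def by (subst Max_le_iff) auto

lemma maxdist_triangle: "maxdist a c \<le> maxdist a b + maxdist b c"
proof (rule maxdist_le)
  fix i
  have "\<bar>a$i - c$i\<bar> \<le> \<bar>a$i - b$i\<bar> + \<bar>b$i - c$i\<bar>" by simp
  also have "\<dots> \<le> maxdist a b + maxdist b c"
    using comp_le_maxdist[of a i b] comp_le_maxdist[of b i c] by simp
  finally show "\<bar>a$i - c$i\<bar> \<le> maxdist a b + maxdist b c" .
qed

lemma maxdist_le_dist: "maxdist a b \<le> dist a b"
proof (rule maxdist_le)
  fix i
  show "\<bar>a$i - b$i\<bar> \<le> dist a b"
    using component_le_norm_cart[of "a - b" i] by (simp add: dist_norm)
qed

lemma ap_trans:
  assumes "ap_less M F M0 a b" "ap_less M F M0 b c"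
  shows "ap_less M F M0 a c"
  unfolding ap_less_def
proof (intro allI impI)
  fix \<delta> :: real assume d: "\<delta> > 0"
  obtain \<xi> n where xi: "ap_pseudoorbit M F M0 \<delta> a b \<xi> n"
    using assms(1) d unfolding ap_less_def by blast
  obtain \<eta> m where eta: "ap_pseudoorbit M F M0 \<delta> b c \<eta> m"
    using assms(2) d unfolding ap_less_def by blast
  define \<zeta> where "\<zeta> i = (if i \<le> n then \<xi> i else \<eta> (i - n))" for i
  have z1: "\<zeta> i = \<eta> (i - n)" if "i \<ge> n" for i
    using xi eta that unfolding \<zeta>_def ap_pseudoorbit_def by auto
  have "ap_pseudoorbit M F M0 \<delta> a c \<zeta> (n + m)"
    unfolding ap_pseudoorbit_def
  proof (intro conjI allI impI)
    show "1 \<le> n + m" using xi unfolding ap_pseudoorbit_def by auto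
    show "\<zeta> 0 = a" using xi unfolding ap_pseudoorbit_def \<zeta>_def by auto
    show "\<zeta> (n + m) = c" using eta z1[of "n+m"] unfolding ap_pseudoorbit_def by auto
  next
    fix i assume "i \<le> n + m"
    then show "\<zeta> i \<in> M"
      using xi eta z1[of i] unfolding ap_pseudoorbit_def \<zeta>_def
      by (cases "i \<le> n") auto
  next
    fix i assume i: "i < n + m" and h: "\<zeta> i \<in> M0"
    show "\<zeta> (Suc i) \<in> M0"
    proof (cases "i < n")
      case True
      then show ?thesis using xi h unfolding ap_pseudoorbit_def \<zeta>_def by auto
    next
      case False
      then have "\<zeta> i = \<eta> (i - n)" "\<zeta> (Suc i) = \<eta> (Suc (i - n))" "i - n < m"
        using z1[of i] z1[of "Suc i"] i by (auto simp: Suc_diff_le)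
      then show ?thesis using eta h unfolding ap_pseudoorbit_def by auto
    qed
  next
    fix i assume i: "i < n + m"
    show "maxdist (\<zeta> (Suc i)) (F (\<zeta> i)) < \<delta>"
    proof (cases "i < n")
      case True
      then show ?thesis using xi unfolding ap_pseudoorbit_def \<zeta>_def by auto
    next
      case False
      then have "\<zeta> i = \<eta> (i - n)" "\<zeta> (Suc i) = \<eta> (Suc (i - n))" "i - n < m"
        using z1[of i] z1[of "Suc i"] i by (auto simp: Suc_diff_le)
      then show ?thesis using eta unfolding ap_pseudoorbit_def by auto
    qed
  qed
  then show "\<exists>\<xi> n. ap_pseudoorbit M F M0 \<delta> a c \<xi> n" by blast
qed

theorem mainTheorem3:
  fixes M M0 M1 :: "(real^'n) set" and F :: "real^'n \<Rightarrow> real^'n" and x :: "real^'n"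
  assumes "closed M"
    and "continuous_on M F" and "F ` M \<subseteq> M" and "bounded (F ` M)"
    and "M = M0 \<union> M1" and "M0 \<inter> M1 = {}" and "closed M0"
    and "F ` M0 \<subseteq> M0" and "F ` M1 \<subseteq> M1"
    and "x \<in> M1" and "x \<in> R_ap M F M0"
  shows "closure (ap_class M F M0 x) \<subseteq> M0 \<union> ap_class M F M0 x
    \<and> (closure (ap_class M F M0 x) \<subseteq> M1 \<longrightarrow> closed (ap_class M F M0 x))"
proof -
  define C where "C = ap_class M F M0 x"
  have CM: "C \<subseteq> M" unfolding C_def ap_class_def R_ap_def by auto
  have clM: "closure C \<subseteq> M" using CM assms(1) by (simp add: closure_minimal)
  have key: "y \<in> C" if y: "y \<in> closure C" "y \<notin> M0" for y
  proof -
    have yM: "y \<in> M" using y clM by auto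
    have "open (- M0)" using assms(7) by auto
    then obtain e0 where e0: "e0 > 0" "\<And>w. dist w y < e0 \<Longrightarrow> w \<notin> M0"
      using y(2) unfolding open_dist by (metis ComplD ComplI dist_commute)
    have xy: "ap_less M F M0 x y"
      unfolding ap_less_def
    proof (intro allI impI)
      fix \<delta> :: real assume d: "\<delta> > 0"
      obtain z where z: "z \<in> C" "dist z y < min e0 (\<delta>/2)"
        using y(1) closure_approachable[of y C] e0(1) d
        by (metis half_gt_zero min_less_iff_conj)
      have "ap_less M F M0 x z" using z(1) unfolding C_def ap_class_def ap_equiv_def by auto
      then obtain \<xi> n where xi: "ap_pseudoorbit M F M0 (\<delta>/2) x z \<xi> n"
        using d unfolding ap_less_def by (meson half_gt_zero)
      have zM0: "z \<notin> M0" using e0 z by auto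
      have n1: "n \<ge> 1" using xi unfolding ap_pseudoorbit_def by auto
      have "ap_pseudoorbit M F M0 \<delta> x y (\<xi>(n:=y)) n"
        unfolding ap_pseudoorbit_def
      proof (intro conjI allI impI)
        show "1 \<le> n" by fact
        show "(\<xi>(n := y)) 0 = x" using n1 xi unfolding ap_pseudoorbit_def by auto
        show "(\<xi>(n := y)) n = y" by simp
      next
        fix i assume "i \<le> n" then show "(\<xi>(n := y)) i \<in> M"
          using yM xi unfolding ap_pseudoorbit_def by auto
      next
        fix i assume i: "i < n" and h: "(\<xi>(n := y)) i \<in> M0"
        show "(\<xi>(n := y)) (Suc i) \<in> M0"
          using h i xi zM0 unfolding ap_pseudoorbit_def by (cases "Suc i = n") auto
      next
        fix i assume i: "i < n"
        show "maxdist ((\<xi>(n := y)) (Suc i)) (F ((\<xi>(n := y)) i)) < \<delta>"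
        proof (cases "Suc i = n")
          case True
          have a: "maxdist z (F (\<xi> i)) < \<delta>/2" using xi i True unfolding ap_pseudoorbit_def by auto
          have b: "maxdist y z < \<delta>/2" using maxdist_le_dist[of y z] z(2) by (simp add: dist_commute)
          show ?thesis using True i maxdist_triangle[of y "F (\<xi> i)" z] a b by auto
        next
          case False
          have "maxdist (\<xi> (Suc i)) (F (\<xi> i)) < \<delta>/2" using xi i unfolding ap_pseudoorbit_def by auto
          then show ?thesis using False i d by auto
        qed
      qed
      then show "\<exists>\<xi> n. ap_pseudoorbit M F M0 \<delta> x y \<xi> n" by blast
    qed
    have yx: "ap_less M F M0 y x"
      unfolding ap_less_def
    proof (intro allI impI)
      fix \<delta> :: real assume d: "\<delta> > 0"
      obtain e1 where e1: "e1 > 0" "\<And>w. w \<in> M \<Longrightarrow> dist w y < e1 \<Longrightarrow> dist (F w) (F y) < \<delta>/2"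
        using assms(2) yM d unfolding continuous_on_iff by (meson half_gt_zero)
      obtain z where z: "z \<in> C" "dist z y < e1"
        using y(1) closure_approachable[of y C] e1(1) by blast
      have zM: "z \<in> M" using z CM by auto
      have "ap_less M F M0 z x" using z(1) unfolding C_def ap_class_def ap_equiv_def by auto
      then obtain \<xi> n where xi: "ap_pseudoorbit M F M0 (\<delta>/2) z x \<xi> n"
        using d unfolding ap_less_def by (meson half_gt_zero)
      have n1: "n \<ge> 1" using xi unfolding ap_pseudoorbit_def by auto
      have "ap_pseudoorbit M F M0 \<delta> y x (\<xi>(0:=y)) n"
        unfolding ap_pseudoorbit_def
      proof (intro conjI allI impI)
        show "1 \<le> n" by fact
        show "(\<xi>(0 := y)) 0 = y" by simp
        show "(\<xi>(0 := y)) n = x" using n1 xi unfolding ap_pseudoorbit_def by auto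
      next
        fix i assume "i \<le> n" then show "(\<xi>(0 := y)) i \<in> M"
          using yM xi unfolding ap_pseudoorbit_def by auto
      next
        fix i assume i: "i < n" and h: "(\<xi>(0 := y)) i \<in> M0"
        show "(\<xi>(0 := y)) (Suc i) \<in> M0"
          using h i xi y(2) unfolding ap_pseudoorbit_def by (cases "i = 0") auto
      next
        fix i assume i: "i < n"
        show "maxdist ((\<xi>(0 := y)) (Suc i)) (F ((\<xi>(0 := y)) i)) < \<delta>"
        proof (cases "i = 0")
          case True
          have a: "maxdist (\<xi> 1) (F z) < \<delta>/2" using xi i True unfolding ap_pseudoorbit_def by auto
          have b: "maxdist (F z) (F y) < \<delta>/2"
            using maxdist_le_dist[of "F z" "F y"] e1(2)[OF zM z(2)] by simp
          show ?thesis using True maxdist_triangle[of "\<xi> 1" "F y" "F z"] a b by auto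
        next
          case False
          have "maxdist (\<xi> (Suc i)) (F (\<xi> i)) < \<delta>/2" using xi i unfolding ap_pseudoorbit_def by auto
          then show ?thesis using False i d by auto
        qed
      qed
      then show "\<exists>\<xi> n. ap_pseudoorbit M F M0 \<delta> y x \<xi> n" by blast
    qed
    have "ap_less M F M0 y y" using ap_trans[OF yx xy] .
    then show "y \<in> C" using yM xy yx
      unfolding C_def ap_class_def R_ap_def ap_equiv_def by auto
  qed
  have p1: "closure C \<subseteq> M0 \<union> C" using key by auto
  have p2: "closed C" if "closure C \<subseteq> M1"
  proof -
    have "closure C \<subseteq> C" using that key assms(6) by blast
    then show ?thesis using closure_subset_eq by blast
  qed
  show ?thesis using p1 p2 unfolding C_def by blast
qed

end
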